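(* Let $\Gamma$ be a primitive strongly regular graph with $v$ vertices, valency $k$, eigenvalues $k > e^+ > 0 > e^-$, where the multiplicity $m^-$ of $e^-$ satisfies $ve^- = m^-(e^- - k)$. If $\Gamma$ has $m^-+1$ Delsarte cocliques, then a symmetric $2$-$(\tilde v, \tilde k, c)$ design exists, where $\tilde v = \frac{(e^+)^2+ e^+e^-+e^+ - (e^-)^2}{(e^+)^2 + e^-}$, $\tilde k = \frac{(e^-+1)e^+}{(e^+)^2 + e^-}$ and $c = \frac{-(e^+)^2 + e^+}{(e^+)^2 + e^-}$, and $e^+ + 1$ divides $2c+4$.
   Context: A strongly regular graph has $v$ vertices, is $k$-regular, and the number of common neighbours of two distinct vertices depends only on whether they are adjacent; its adjacency matrix has eigenvalues $k \ge e^+ \ge 0 > e^-$, and $m^-$ is the multiplicity of $e^-$. Primitive means the graph and its complement are connected. A Delsarte coclique is a set of pairwise non-adjacent vertices of size $\frac{ve^-}{e^- - k}$. A symmetric $2$-$(\tilde v,\tilde k,c)$ design is a family of $\tilde k$-subsets (blocks) of a $\tilde v$-set such that every pair of distinct points lies in exactly $c$ blocks and any two distinct blocks meet in a constant number of points. *)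

theory Defs
  imports "HOL-Analysis.Analysis"
begin

definition simple_graph :: "('v \<Rightarrow> 'v \<Rightarrow> bool) \<Rightarrow> bool" where
  "simple_graph adj \<longleftrightarrow> (\<forall>x y. adj x y \<longrightarrow> adj y x) \<and> (\<forall>x. \<not> adj x x)"

definition complement_graph :: "('v \<Rightarrow> 'v \<Rightarrow> bool) \<Rightarrow> 'v \<Rightarrow> 'v \<Rightarrow> bool" where
  "complement_graph adj x y \<longleftrightarrow> x \<noteq> y \<and> \<not> adj x y"

definition graph_connected :: "('v \<Rightarrow> 'v \<Rightarrow> bool) \<Rightarrow> bool" where
  "graph_connected adj \<longleftrightarrow> (\<forall>x y. (x, y) \<in> {(a, b). adj a b}\<^sup>*)"

definition strongly_regular :: "('v::finite \<Rightarrow> 'v \<Rightarrow> bool) \<Rightarrow> nat \<Rightarrow> bool" where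
  "strongly_regular adj k \<longleftrightarrow> simple_graph adj \<and>
     (\<forall>x. card {y. adj x y} = k) \<and>
     (\<exists>lam mu :: nat. \<forall>x y. x \<noteq> y \<longrightarrow>
        card {z. adj x z \<and> adj y z} = (if adj x y then lam else mu))"

definition primitive :: "('v \<Rightarrow> 'v \<Rightarrow> bool) \<Rightarrow> bool" where
  "primitive adj \<longleftrightarrow> graph_connected adj \<and> graph_connected (complement_graph adj)"

definition adj_matrix :: "('v::finite \<Rightarrow> 'v \<Rightarrow> bool) \<Rightarrow> real^'v^'v" where
  "adj_matrix adj = (\<chi> i j. if adj i j then 1 else 0)"

definition is_eigenvalue :: "real^'n^'n \<Rightarrow> real \<Rightarrow> bool" where
  "is_eigenvalue A e \<longleftrightarrow> (\<exists>x. x \<noteq> 0 \<and> A *v x = e *\<^sub>R x)"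

text \<open>Multiplicity of an eigenvalue (the matrices considered are symmetric, so the
  geometric multiplicity, i.e. the dimension of the eigenspace, is the multiplicity).\<close>

definition eig_multiplicity :: "real^'n^'n \<Rightarrow> real \<Rightarrow> nat" where
  "eig_multiplicity A e = dim {x. A *v x = e *\<^sub>R x}"

definition coclique :: "('v \<Rightarrow> 'v \<Rightarrow> bool) \<Rightarrow> 'v set \<Rightarrow> bool" where
  "coclique adj C \<longleftrightarrow> (\<forall>x\<in>C. \<forall>y\<in>C. \<not> adj x y)"

definition delsarte_coclique ::
  "('v::finite \<Rightarrow> 'v \<Rightarrow> bool) \<Rightarrow> nat \<Rightarrow> real \<Rightarrow> 'v set \<Rightarrow> bool" where
  "delsarte_coclique adj k em C \<longleftrightarrow> coclique adj C \<and>
     real (card C) = real CARD('v) * em / (em - real k)"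

definition symmetric_design :: "nat \<Rightarrow> nat \<Rightarrow> nat \<Rightarrow> nat set set \<Rightarrow> bool" where
  "symmetric_design v k c B \<longleftrightarrow>
     (\<forall>b\<in>B. b \<subseteq> {..<v} \<and> card b = k) \<and>
     (\<forall>x<v. \<forall>y<v. x \<noteq> y \<longrightarrow> card {b\<in>B. x \<in> b \<and> y \<in> b} = c) \<and>
     (\<exists>l. \<forall>b1\<in>B. \<forall>b2\<in>B. b1 \<noteq> b2 \<longrightarrow> card (b1 \<inter> b2) = l)"

end

theory Submission
  imports Defs
begin

locale srg0 =
  fixes adj :: "'v::finite \<Rightarrow> 'v \<Rightarrow> bool" and k lam mu :: nat
  assumes sym: "\<And>x y. adj x y \<Longrightarrow> adj y x" and irr: "\<And>x. \<not> adj x x"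
    and deg: "\<And>x. card {y. adj x y} = k"
    and codeg: "\<And>x y. x \<noteq> y \<Longrightarrow> card {z. adj x z \<and> adj y z} = (if adj x y then lam else mu)"
begin

definition a :: "'v \<Rightarrow> 'v \<Rightarrow> real" where "a x y = (if adj x y then 1 else 0)"
definition Sg :: "('v \<Rightarrow> real) \<Rightarrow> 'v \<Rightarrow> real" where "Sg g x = (\<Sum>y\<in>UNIV. a x y * g y)"

lemma a_sym: "a x y = a y x" unfolding a_def by (auto dest: sym)

lemma sum_a: "(\<Sum>y\<in>UNIV. a x y) = real k"
proof -
  have "(\<Sum>y\<in>UNIV. a x y) = (\<Sum>y\<in>{y. adj x y}. 1)"
    unfolding a_def by (simp add: sum.If_cases Collect_conv_if)
  then show ?thesis using deg[of x] by simp
qed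

lemma sum_ind: "(\<Sum>(y::'v)\<in>UNIV. (if P y then 1 else 0::real)) = real (card {y. P y})"
proof -
  have f: "finite (UNIV::'v set)" by simp
  show ?thesis using sum_of_bool_eq[OF f, of P, where 'a=real] by (simp add: of_bool_def)
qed

lemma codeg_real: "(\<Sum>z\<in>UNIV. a x z * a z y) =
   (if y = x then real k else 0) + real lam * a x y + real mu * (1 - a x y - (if y = x then 1 else 0))"
proof -
  have e: "(\<Sum>z\<in>UNIV. a x z * a z y) = real (card {z. adj x z \<and> adj y z})"
    unfolding a_def using sym by (auto simp: sum_ind[symmetric] intro!: sum.cong)
  show ?thesis
  proof (cases "y = x")
    case True then show ?thesis using e deg[of x] irr by (simp add: a_def)
  next
    case False then show ?thesis using e codeg[of x y] sym by (auto simp: a_def)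
  qed
qed

lemma Sg_Sg: "Sg (Sg g) x = (real lam - real mu) * Sg g x + (real k - real mu) * g x + real mu * (\<Sum>y\<in>UNIV. g y)"
proof -
  have "Sg (Sg g) x = (\<Sum>z\<in>UNIV. \<Sum>y\<in>UNIV. a x z * a z y * g y)"
    unfolding Sg_def by (simp add: sum_distrib_left mult.assoc)
  also have "\<dots> = (\<Sum>y\<in>UNIV. (\<Sum>z\<in>UNIV. a x z * a z y) * g y)"
    by (subst sum.swap) (simp add: sum_distrib_right)
  also have "\<dots> = (\<Sum>y\<in>UNIV. (if y = x then real k * g y else 0) + real lam * (a x y * g y)
        + real mu * g y - real mu * (a x y * g y) - (if y = x then real mu * g y else 0))"
    apply (rule sum.cong, simp)
    apply (subst codeg_real)
    by (auto simp: algebra_simps)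
  also have "\<dots> = (\<Sum>y\<in>UNIV. (if y = x then real k * g y else 0)) + (\<Sum>y\<in>UNIV. real lam * (a x y * g y))
        + (\<Sum>y\<in>UNIV. real mu * g y) - (\<Sum>y\<in>UNIV. real mu * (a x y * g y)) - (\<Sum>y\<in>UNIV. (if y = x then real mu * g y else 0))"
    by (simp only: sum.distrib sum_subtractf)
  also have "\<dots> = real k * g x + real lam * Sg g x + real mu * (\<Sum>y\<in>UNIV. g y) - real mu * Sg g x - real mu * g x"
    by (simp add: Sg_def sum_distrib_left[symmetric])
  finally show ?thesis by (simp add: algebra_simps)
qed

lemma sum_Sg: "(\<Sum>x\<in>UNIV. Sg g x) = real k * (\<Sum>y\<in>UNIV. g y)"
proof -
  have "(\<Sum>x\<in>UNIV. Sg g x) = (\<Sum>y\<in>UNIV. (\<Sum>x\<in>UNIV. a y x) * g y)"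
    unfolding Sg_def by (subst sum.swap) (simp add: sum_distrib_right a_sym)
  then show ?thesis by (simp add: sum_a sum_distrib_left)
qed

lemma Sg_const: "Sg (\<lambda>_. c) x = real k * c"
  unfolding Sg_def by (simp add: sum_distrib_right[symmetric] sum_a)

lemma Sg_const': "Sg (\<lambda>_. c) = (\<lambda>_. real k * c)"
  using Sg_const by auto

lemma vmu: "real CARD('v) * real mu = real k * real k - (real lam - real mu) * real k - (real k - real mu)"
  using Sg_Sg[of "\<lambda>_. 1" x] by (simp add: Sg_const' Sg_const algebra_simps)

lemma mat_Sg: "(adj_matrix adj *v x) $ i = Sg (\<lambda>j. x $ j) i"
  unfolding adj_matrix_def Sg_def a_def matrix_vector_mult_def by simp

lemma eig_root:
  assumes "is_eigenvalue (adj_matrix adj) e" "e \<noteq> real k"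
  shows "e * e = (real lam - real mu) * e + (real k - real mu)"
proof -
  obtain x where x: "x \<noteq> 0" "adj_matrix adj *v x = e *\<^sub>R x"
    using assms(1) unfolding is_eigenvalue_def by blast
  let ?g = "\<lambda>j. x $ j"
  have S: "Sg ?g = (\<lambda>i. e * ?g i)"
    using x(2) by (auto simp: mat_Sg[symmetric] vec_eq_iff)
  have "real k * (\<Sum>y\<in>UNIV. ?g y) = e * (\<Sum>y\<in>UNIV. ?g y)"
    using sum_Sg[of ?g] by (simp add: S sum_distrib_left)
  then have z: "(\<Sum>y\<in>UNIV. ?g y) = 0" using assms(2) by simp
  obtain i where i: "x $ i \<noteq> 0" using x(1) by (auto simp: vec_eq_iff)
  have "Sg (Sg ?g) i = Sg (\<lambda>j. e * ?g j) i" using S by simp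
  also have "\<dots> = e * Sg ?g i" by (simp add: Sg_def sum_distrib_left algebra_simps)
  also have "\<dots> = e * e * x $ i" using S by (metis mult.assoc)
  finally have "Sg (Sg ?g) i = e * e * x $ i" .
  then have "e * e * x $ i = ((real lam - real mu) * e + (real k - real mu)) * x $ i"
    using Sg_Sg[of ?g i] z S by (simp add: algebra_simps)
  then show ?thesis using i by simp
qed

end

locale srg1 = srg0 adj k lam mu for adj :: "'v::finite \<Rightarrow> 'v \<Rightarrow> bool" and k lam mu +
  fixes r s :: real
  assumes rs_sum: "r + s = real lam - real mu" and rs_prod: "r * s = real mu - real k"
    and r_pos: "r > 0" and s_neg: "s < 0" and r_k: "r < real k"
begin


lemma vmu2: "real CARD('v) * real mu = (real k - r) * (real k - s)"
proof -
  have "real lam - real mu = r + s" "real k - real mu = - (r * s)" using rs_sum rs_prod by auto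
  then show ?thesis using vmu by (simp add: algebra_simps)
qed

lemma mu_eq: "real mu = real k + r * s" using rs_prod by simp

definition nb :: "'v set \<Rightarrow> 'v \<Rightarrow> real" where "nb C x = (\<Sum>y\<in>C. a x y)"

lemma delsarte_nb:
  assumes cc: "\<forall>x\<in>C. \<forall>y\<in>C. \<not> adj x y" and sz: "real (card C) * (real k - s) = - real CARD('v) * s"
  shows "nb C x = (if x \<in> C then 0 else -s)"
proof -
  define al where "al = real (card C)"
  define t where "t = -s"
  have fC: "finite C" by simp
  have aC: "\<And>x y. x \<in> C \<Longrightarrow> y \<in> C \<Longrightarrow> a x y = 0" using cc by (simp add: a_def)
  have n0: "\<And>x. x \<in> C \<Longrightarrow> nb C x = 0" using aC by (simp add: nb_def)
  have s1: "(\<Sum>x\<in>UNIV. nb C x) = al * real k"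
  proof -
    have "(\<Sum>x\<in>UNIV. nb C x) = (\<Sum>y\<in>C. \<Sum>x\<in>UNIV. a y x)"
      unfolding nb_def by (subst sum.swap) (simp add: a_sym)
    then show ?thesis by (simp add: sum_a al_def)
  qed
  have s2: "(\<Sum>x\<in>UNIV. nb C x * nb C x) = al * real k + real mu * (al * al - al)"
  proof -
    have "(\<Sum>x\<in>UNIV. nb C x * nb C x) = (\<Sum>x\<in>UNIV. \<Sum>y\<in>C. \<Sum>y'\<in>C. a y x * a x y')"
      unfolding nb_def by (simp add: sum_product a_sym)
    also have "\<dots> = (\<Sum>y\<in>C. \<Sum>x\<in>UNIV. \<Sum>y'\<in>C. a y x * a x y')"
      by (rule sum.swap)
    also have "\<dots> = (\<Sum>y\<in>C. \<Sum>y'\<in>C. \<Sum>x\<in>UNIV. a y x * a x y')"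
      by (rule sum.cong[OF refl], rule sum.swap)
    also have "\<dots> = (\<Sum>y\<in>C. \<Sum>y'\<in>C. (if y' = y then real k - real mu else 0) + real mu)"
      apply (rule sum.cong, simp)+
      apply (subst codeg_real)
      using aC by auto
    also have "\<dots> = (\<Sum>y\<in>C. (real k - real mu) + al * real mu)"
      apply (rule sum.cong, simp)
      by (simp add: sum.distrib al_def)
    also have "\<dots> = al * real k + real mu * (al * al - al)"
      by (simp add: al_def algebra_simps)
    finally show ?thesis .
  qed
  have s3: "(\<Sum>x\<in>UNIV. (if x \<in> C then 0 else 1::real)) = real CARD('v) - al"
  proof -
    have "(\<Sum>x\<in>UNIV. (if x \<in> C then 0 else 1::real)) = (\<Sum>x\<in>UNIV. (if x \<notin> C then 1 else 0::real))"
      by (rule sum.cong) auto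
    also have "\<dots> = real (card {y. y \<notin> C})" by (rule sum_ind)
    also have "{y. y \<notin> C} = UNIV - C" by auto
    finally have "(\<Sum>x\<in>UNIV. (if x \<in> C then 0 else 1::real)) = real (card (UNIV - C))" .
    also have "\<dots> = real CARD('v) - al" by (simp add: card_Diff_subset al_def of_nat_diff card_mono)
    finally show ?thesis .
  qed
  have t_pos: "t > 0" using s_neg t_def by simp
  have kt: "real k + t > 0" using t_pos r_k r_pos by simp
  have hal: "al * (real k + t) = real CARD('v) * t" using sz by (simp add: al_def t_def)
  have hv: "real CARD('v) * real mu = (real k - r) * (real k + t)" using vmu2 t_def by simp
  have hmu: "real mu = real k - r * t" using mu_eq t_def by simp
  have mual: "real mu * al = t * (real k - r)"
  proof -
    have "real mu * al * (real k + t) = t * (real k - r) * (real k + t)"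
      using hal hv by (metis mult.assoc mult.commute)
    then show ?thesis using kt by simp
  qed
  have vt: "t * t * real CARD('v) = t * al * (real k + t)"
  proof -
    have "t * t * real CARD('v) = t * (real CARD('v) * t)" by (simp add: algebra_simps)
    also have "\<dots> = t * (al * (real k + t))" using hal by simp
    finally show ?thesis by (simp add: algebra_simps)
  qed
  have E: "al * real k + real mu * (al * al - al) - 2 * t * (al * real k) + t * t * (real CARD('v) - al) = 0"
  proof -
    have "al * real k + real mu * (al * al - al) - 2 * t * (al * real k) + t * t * (real CARD('v) - al)
        = al * (real k + real mu * al - real mu - t * real k)"
      using vt by (simp add: algebra_simps)
    also have "\<dots> = al * (real k + t * (real k - r) - real mu - t * real k)" by (simp only: mual)
    also have "\<dots> = 0" using hmu by (simp add: algebra_simps)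
    finally show ?thesis .
  qed
  have sq: "(\<Sum>x\<in>UNIV. (nb C x - (if x \<in> C then 0 else t))^2) = 0"
  proof -
    have "\<And>x. (nb C x - (if x \<in> C then 0 else t))^2 = nb C x * nb C x - 2 * t * nb C x + t * t * (if x \<in> C then 0 else 1)"
      using n0 by (auto simp: power2_eq_square algebra_simps)
    then have "(\<Sum>x\<in>UNIV. (nb C x - (if x \<in> C then 0 else t))^2)
       = (\<Sum>x\<in>UNIV. nb C x * nb C x) - 2 * t * (\<Sum>x\<in>UNIV. nb C x) + t * t * (\<Sum>x\<in>UNIV. (if x \<in> C then 0 else 1::real))"
      by (simp add: sum.distrib sum_subtractf sum_distrib_left)
    also have "\<dots> = 0" using s1 s2 s3 E by simp
    finally show ?thesis .
  qed
  then have "\<forall>x\<in>UNIV. (nb C x - (if x \<in> C then 0 else t))^2 = 0"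
    by (subst sum_nonneg_eq_0_iff[symmetric]) auto
  then show ?thesis using t_def by auto
qed

definition ES :: "(real^'v) set" where "ES = {x. adj_matrix adj *v x = s *\<^sub>R x}"

lemma ES_iff: "x \<in> ES \<longleftrightarrow> (\<forall>i. Sg (\<lambda>j. x $ j) i = s * x $ i)"
  unfolding ES_def by (auto simp: vec_eq_iff mat_Sg)

lemma Sg_add: "Sg (\<lambda>j. f j + g j) i = Sg f i + Sg g i"
  by (simp add: Sg_def algebra_simps sum.distrib)

lemma Sg_scale: "Sg (\<lambda>j. c * f j) i = c * Sg f i"
  by (simp add: Sg_def algebra_simps sum_distrib_left)

lemma subspace_ES: "subspace ES"
  unfolding subspace_def ES_def
  by (auto simp: matrix_vector_right_distrib matrix_vector_mult_scaleR scaleR_add_right)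

lemma sum_ES: assumes "u \<in> ES" shows "(\<Sum>i\<in>UNIV. u $ i) = 0"
proof -
  have "real k * (\<Sum>i\<in>UNIV. u $ i) = s * (\<Sum>i\<in>UNIV. u $ i)"
    using sum_Sg[of "\<lambda>j. u $ j"] assms by (simp add: ES_iff sum_distrib_left)
  moreover have "real k \<noteq> s" using s_neg by simp
  ultimately show ?thesis by simp
qed

lemma v_pos: "real CARD('v) > 0" by simp

definition dd :: real where "dd = (real k - r) / real CARD('v)"

definition gv :: "'v \<Rightarrow> real^'v" where
  "gv y = (\<chi> i. a i y - r * (if i = y then 1 else 0) - dd)"

lemma mu_dd: "real mu - dd * real k = - s * dd"
proof -
  have "real mu = dd * (real k - s)" using vmu2 v_pos unfolding dd_def by (simp add: field_simps)
  then show ?thesis by (simp add: algebra_simps)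
qed

lemma gv_ES: "gv y \<in> ES"
  unfolding ES_iff
proof
  fix i
  have "Sg (\<lambda>j. gv y $ j) i = (\<Sum>j\<in>UNIV. a i j * a j y - (if j = y then r * a i j else 0) - dd * a i j)"
    unfolding Sg_def gv_def by (rule sum.cong) (auto simp: algebra_simps)
  also have "\<dots> = (\<Sum>j\<in>UNIV. a i j * a j y) - (\<Sum>j\<in>UNIV. (if j = y then r * a i j else 0)) - (\<Sum>j\<in>UNIV. dd * a i j)"
    by (simp only: sum_subtractf)
  also have "\<dots> = (\<Sum>j\<in>UNIV. a i j * a j y) - r * a i y - dd * real k"
  proof -
    have 1: "(\<Sum>j\<in>UNIV. (if j = y then r * a i j else 0)) = r * a i y" by simp
    have 2: "(\<Sum>j\<in>UNIV. dd * a i j) = dd * real k" by (simp add: sum_distrib_left[symmetric] sum_a)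
    show ?thesis unfolding 1 2 ..
  qed
  also have "\<dots> = (if y = i then real k else 0) + real lam * a i y + real mu * (1 - a i y - (if y = i then 1 else 0))
      - r * a i y - dd * real k" by (simp add: codeg_real)
  also have "\<dots> = s * gv y $ i"
    using rs_sum rs_prod mu_dd by (auto simp: gv_def algebra_simps a_def irr)
  finally show "Sg (\<lambda>j. gv y $ j) i = s * gv y $ i" .
qed

lemma inner_gv: assumes "u \<in> ES" shows "u \<bullet> gv y = (s - r) * u $ y"
proof -
  have "u \<bullet> gv y = (\<Sum>i\<in>UNIV. a y i * u $ i - (if i = y then r * u $ i else 0) - dd * u $ i)"
    unfolding inner_vec_def gv_def by (rule sum.cong) (auto simp: algebra_simps a_sym)
  also have "\<dots> = Sg (\<lambda>j. u $ j) y - (\<Sum>i\<in>UNIV. (if i = y then r * u $ i else 0)) - (\<Sum>i\<in>UNIV. dd * u $ i)"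
    by (simp only: sum_subtractf Sg_def)
  also have "\<dots> = s * u $ y - r * u $ y"
  proof -
    have 1: "(\<Sum>i\<in>UNIV. (if i = y then r * u $ i else 0)) = r * u $ y" by simp
    have 2: "(\<Sum>i\<in>UNIV. dd * u $ i) = 0" using sum_ES[OF assms] by (simp add: sum_distrib_left[symmetric])
    show ?thesis unfolding 1 2 using assms by (simp add: ES_iff)
  qed
  finally show ?thesis by (simp add: algebra_simps)
qed

lemma comb_comp:
  assumes cc: "\<forall>x\<in>C. \<forall>y\<in>C. \<not> adj x y" and i: "i \<in> C"
  shows "(\<Sum>y\<in>C. c y *\<^sub>R gv y) $ i = - r * c i - dd * (\<Sum>y\<in>C. c y)"
proof -
  have "(\<Sum>y\<in>C. c y *\<^sub>R gv y) $ i = (\<Sum>y\<in>C. (if y = i then - r * c y else 0) - dd * c y)"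
    unfolding sum_component gv_def using cc i by (intro sum.cong) (auto simp: a_def algebra_simps)
  also have "\<dots> = (\<Sum>y\<in>C. (if y = i then - r * c y else 0)) - (\<Sum>y\<in>C. dd * c y)"
    by (simp only: sum_subtractf)
  also have "\<dots> = - r * c i - dd * (\<Sum>y\<in>C. c y)"
    using i by (simp add: sum_distrib_left)
  finally show ?thesis .
qed

lemma dd_pos: "dd > 0" unfolding dd_def using r_k by simp

lemma gv_indep:
  assumes cc: "\<forall>x\<in>C. \<forall>y\<in>C. \<not> adj x y" and z: "(\<Sum>y\<in>C. c y *\<^sub>R gv y) = 0"
  shows "\<forall>y\<in>C. c y = 0"
proof -
  have e: "\<And>i. i \<in> C \<Longrightarrow> - r * c i - dd * (\<Sum>y\<in>C. c y) = 0"
    using comb_comp[OF cc] z by (metis zero_index)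
  have "(\<Sum>i\<in>C. - r * c i - dd * (\<Sum>y\<in>C. c y)) = 0" using e by simp
  moreover have "(\<Sum>i\<in>C. - r * c i - dd * (\<Sum>y\<in>C. c y)) = - r * (\<Sum>y\<in>C. c y) - real (card C) * (dd * (\<Sum>y\<in>C. c y))"
    by (simp add: sum_subtractf sum_distrib_left)
  ultimately have "(r + real (card C) * dd) * (\<Sum>y\<in>C. c y) = 0"
    by (simp add: algebra_simps)
  moreover have "r + real (card C) * dd > 0" using r_pos dd_pos by (simp add: add_pos_nonneg)
  ultimately have "(\<Sum>y\<in>C. c y) = 0" by simp
  then show ?thesis using e r_pos by auto
qed

lemma spanning:
  fixes h :: "'i \<Rightarrow> real^'v" and I :: "'i set"
  assumes fI: "finite I" and cI: "card I = dim ES" and hE: "\<And>i. i \<in> I \<Longrightarrow> h i \<in> ES"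
    and ind: "\<And>c. (\<Sum>i\<in>I. c i *\<^sub>R h i) = 0 \<Longrightarrow> \<forall>i\<in>I. c i = 0" and u: "u \<in> ES"
  shows "\<exists>c. u = (\<Sum>i\<in>I. c i *\<^sub>R h i)"
proof -
  have inj: "inj_on h I"
  proof (rule inj_onI, rule ccontr)
    fix i j assume ij: "i \<in> I" "j \<in> I" "h i = h j" "i \<noteq> j"
    let ?c = "\<lambda>l. if l = i then 1 else if l = j then -1 else (0::real)"
    have "(\<Sum>l\<in>I. ?c l *\<^sub>R h l) = (\<Sum>l\<in>I. (if l = i then h l else 0) - (if l = j then h l else 0))"
      using ij by (intro sum.cong) auto
    also have "\<dots> = h i - h j" using ij fI by (simp add: sum_subtractf)
    also have "\<dots> = 0" using ij by simp
    finally have "\<forall>l\<in>I. ?c l = 0" by (rule ind)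
    then show False using ij by auto
  qed
  have indep: "independent (h ` I)"
    unfolding independent_explicit
  proof (intro conjI allI impI ballI)
    show "finite (h ` I)" using fI by simp
    fix c w assume z: "(\<Sum>v\<in>h ` I. c v *\<^sub>R v) = 0" and w: "w \<in> h ` I"
    have "(\<Sum>i\<in>I. c (h i) *\<^sub>R h i) = 0" using z by (simp add: sum.reindex[OF inj])
    then have "\<forall>i\<in>I. c (h i) = 0" by (rule ind)
    then show "c w = 0" using w by auto
  qed
  have "ES \<subseteq> span (h ` I)"
    using card_eq_dim[of "h ` I" ES] indep hE fI cI card_image[OF inj] by auto
  then have "u \<in> span (h ` I)" using u by auto
  then obtain c where "u = (\<Sum>v\<in>h ` I. c v *\<^sub>R v)" using span_finite[of "h ` I"] fI by auto
  then have "u = (\<Sum>i\<in>I. c (h i) *\<^sub>R h i)" by (simp add: sum.reindex[OF inj])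
  then show ?thesis by (rule exI[of _ "\<lambda>i. c (h i)"])
qed

lemma B_id:
  assumes cc: "\<forall>x\<in>C. \<forall>y\<in>C. \<not> adj x y" and cC: "card C = dim ES" and u: "u \<in> ES" and u': "u' \<in> ES"
  shows "r * (r * real CARD('v) + real (card C) * (real k - r)) * (u \<bullet> u') =
    (r - s) * ((r * real CARD('v) + real (card C) * (real k - r)) * (\<Sum>i\<in>C. u $ i * u' $ i)
       - (real k - r) * (\<Sum>i\<in>C. u $ i) * (\<Sum>i\<in>C. u' $ i))"
proof -
  obtain c where ue: "u' = (\<Sum>y\<in>C. c y *\<^sub>R gv y)"
    using spanning[of C gv u'] cC gv_ES gv_indep[OF cc] u' by auto
  define S where "S = (\<Sum>y\<in>C. c y)"
  define X where "X = (\<Sum>y\<in>C. c y * u $ y)"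
  define U where "U = (\<Sum>i\<in>C. u $ i)"
  define al where "al = real (card C)"
  have i1: "u \<bullet> u' = (s - r) * X"
    unfolding ue X_def by (simp add: inner_sum_right inner_gv[OF u] sum_distrib_left algebra_simps)
  have cmp: "\<And>i. i \<in> C \<Longrightarrow> u' $ i = - r * c i - dd * S"
    unfolding ue S_def by (rule comb_comp[OF cc])
  have i2: "(\<Sum>i\<in>C. u $ i * u' $ i) = - r * X - dd * S * U"
  proof -
    have "(\<Sum>i\<in>C. u $ i * u' $ i) = (\<Sum>i\<in>C. - r * (c i * u $ i) - (dd * S) * u $ i)"
    proof (rule sum.cong[OF refl])
      fix i assume iC: "i \<in> C"
      show "u $ i * u' $ i = - r * (c i * u $ i) - (dd * S) * u $ i"
        unfolding cmp[OF iC] by (simp add: algebra_simps)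
    qed
    also have "\<dots> = - r * X - dd * S * U"
      unfolding X_def U_def by (simp add: sum_subtractf sum_distrib_left)
    finally show ?thesis .
  qed
  have i3: "(\<Sum>i\<in>C. u' $ i) = - r * S - al * dd * S"
  proof -
    have "(\<Sum>i\<in>C. u' $ i) = (\<Sum>i\<in>C. - r * c i - dd * S)"
      using cmp by (intro sum.cong) auto
    also have "\<dots> = - r * S - al * dd * S"
      unfolding S_def al_def by (simp add: sum_subtractf sum_distrib_left mult.assoc)
    finally show ?thesis .
  qed
  have Gdd: "(r * real CARD('v) + al * (real k - r)) * dd = (real k - r) * (r + al * dd)"
    unfolding dd_def using v_pos by (simp add: field_simps)
  have "(r - s) * ((r * real CARD('v) + al * (real k - r)) * (- r * X - dd * S * U)
       - (real k - r) * U * (- r * S - al * dd * S))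
     = (r - s) * ((r * real CARD('v) + al * (real k - r)) * (- r * X))
       - (r - s) * S * U * ((r * real CARD('v) + al * (real k - r)) * dd - (real k - r) * (r + al * dd))"
    by (simp add: algebra_simps)
  also have "\<dots> = r * (r * real CARD('v) + al * (real k - r)) * ((s - r) * X)"
    unfolding Gdd by (simp add: algebra_simps)
  finally show ?thesis unfolding i1 i2 i3 U_def al_def by simp
qed

end

definition ind :: "'a set \<Rightarrow> 'a \<Rightarrow> real" where "ind C i = (if i \<in> C then 1 else 0)"

lemma sum_ind1: "finite X \<Longrightarrow> (\<Sum>i\<in>X. ind D i) = real (card (X \<inter> D))"
  unfolding ind_def by (simp add: sum.If_cases Int_def)

lemma sum_ind2: "finite X \<Longrightarrow> (\<Sum>i\<in>X. ind D i * ind E i) = real (card (X \<inter> D \<inter> E))"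
proof -
  assume f: "finite X"
  have "(\<Sum>i\<in>X. ind D i * ind E i) = (\<Sum>i\<in>X. ind (D \<inter> E) i)"
    unfolding ind_def by (intro sum.cong) auto
  then show ?thesis using sum_ind1[OF f, of "D \<inter> E"] by (simp add: Int_assoc)
qed

locale srg2 = srg1 adj k lam mu r s for adj :: "'v::finite \<Rightarrow> 'v \<Rightarrow> bool" and k lam mu r s +
  fixes F :: "'v set set" and m :: nat
  assumes dimES: "dim ES = m" and cardF: "card F = Suc m"
    and cocF: "\<And>C. C \<in> F \<Longrightarrow> (\<forall>x\<in>C. \<forall>y\<in>C. \<not> adj x y)" and cardC: "\<And>C. C \<in> F \<Longrightarrow> card C = m"
    and szrel: "real m * (real k - s) = - real CARD('v) * s"
begin

definition W :: "'v set \<Rightarrow> real^'v" where "W C = (\<chi> i. real CARD('v) * ind C i - real m)"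

lemma al_pos: "real m > 0"
proof -
  have "- real CARD('v) * s > 0" using s_neg by (simp add: mult_pos_neg)
  then have "real m * (real k - s) > 0" using szrel by simp
  moreover have "real k - s > 0" using s_neg by simp
  ultimately show ?thesis by (simp add: zero_less_mult_iff)
qed

lemma al_lt_v: "real m < real CARD('v)"
proof -
  have ks: "real k - s > 0" using s_neg by simp
  have "real m * (real k - s) < real CARD('v) * (real k - s)"
    using szrel r_k r_pos s_neg by (simp add: algebra_simps)
  then show ?thesis using ks by simp
qed

lemma W_ES: assumes C: "C \<in> F" shows "W C \<in> ES"
  unfolding ES_iff
proof
  fix i
  have nbC: "nb C i = (if i \<in> C then 0 else -s)"
    using delsarte_nb[OF cocF[OF C]] cardC[OF C] szrel by simp
  have "Sg (\<lambda>j. W C $ j) i = real CARD('v) * (\<Sum>j\<in>UNIV. a i j * ind C j) - real m * (\<Sum>j\<in>UNIV. a i j)"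
    unfolding Sg_def W_def by (simp add: algebra_simps sum_subtractf sum_distrib_left)
  also have "(\<Sum>j\<in>UNIV. a i j * ind C j) = nb C i"
  proof -
    have "(\<Sum>j\<in>UNIV. a i j * ind C j) = (\<Sum>j\<in>UNIV. if j \<in> C then a i j else 0)"
      by (rule sum.cong) (auto simp: ind_def)
    also have "\<dots> = (\<Sum>j\<in>UNIV \<inter> C. a i j)" using sum.inter_restrict[of UNIV "a i" C] by simp
    finally show ?thesis by (simp add: nb_def)
  qed
  finally have "Sg (\<lambda>j. W C $ j) i = real CARD('v) * nb C i - real m * real k" by (simp add: sum_a)
  then show "Sg (\<lambda>j. W C $ j) i = s * W C $ i"
    using nbC szrel by (auto simp: W_def ind_def algebra_simps)
qed

lemma W_inner: assumes "D \<in> F" "E \<in> F"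
  shows "W D \<bullet> W E = real CARD('v) ^ 2 * real (card (D \<inter> E)) - real CARD('v) * real m ^ 2"
proof -
  let ?v = "real CARD('v)" and ?a = "real m"
  have "W D \<bullet> W E = (\<Sum>i\<in>UNIV. ?v^2 * (ind D i * ind E i) - ?v * ?a * ind D i - ?v * ?a * ind E i + ?a^2)"
    unfolding inner_vec_def W_def by (intro sum.cong) (auto simp: algebra_simps power2_eq_square)
  also have "\<dots> = ?v^2 * (\<Sum>i\<in>UNIV. ind D i * ind E i) - ?v * ?a * (\<Sum>i\<in>UNIV. ind D i) - ?v * ?a * (\<Sum>i\<in>UNIV. ind E i) + ?v * ?a^2"
    by (simp add: sum.distrib sum_subtractf sum_distrib_left)
  also have "\<dots> = ?v^2 * real (card (D \<inter> E)) - ?v * ?a * ?a - ?v * ?a * ?a + ?v * ?a^2"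
    using cardC assms by (simp add: sum_ind1 sum_ind2)
  finally show ?thesis by (simp add: power2_eq_square algebra_simps)
qed

lemma W_sum1: assumes "C \<in> F"
  shows "(\<Sum>i\<in>C. W D $ i) = real CARD('v) * real (card (C \<inter> D)) - real m ^ 2"
proof -
  have "(\<Sum>i\<in>C. W D $ i) = real CARD('v) * (\<Sum>i\<in>C. ind D i) - real (card C) * real m"
    unfolding W_def by (simp add: sum_subtractf sum_distrib_left)
  then show ?thesis using cardC[OF assms] by (simp add: sum_ind1 power2_eq_square)
qed

lemma W_sum2: assumes "C \<in> F"
  shows "(\<Sum>i\<in>C. W D $ i * W E $ i) = real CARD('v) ^ 2 * real (card (C \<inter> D \<inter> E))
     - real CARD('v) * real m * real (card (C \<inter> D)) - real CARD('v) * real m * real (card (C \<inter> E)) + real m ^ 3"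
proof -
  let ?v = "real CARD('v)" and ?a = "real m"
  have "(\<Sum>i\<in>C. W D $ i * W E $ i) = (\<Sum>i\<in>C. ?v^2 * (ind D i * ind E i) - ?v * ?a * ind D i - ?v * ?a * ind E i + ?a^2)"
    unfolding W_def by (intro sum.cong) (auto simp: algebra_simps power2_eq_square)
  also have "\<dots> = ?v^2 * (\<Sum>i\<in>C. ind D i * ind E i) - ?v * ?a * (\<Sum>i\<in>C. ind D i) - ?v * ?a * (\<Sum>i\<in>C. ind E i) + real (card C) * ?a^2"
    by (simp add: sum.distrib sum_subtractf sum_distrib_left)
  finally show ?thesis using cardC[OF assms] by (simp add: sum_ind1 sum_ind2 power3_eq_cube power2_eq_square)
qed

lemma B_W: assumes C: "C \<in> F" and D: "D \<in> F" and E: "E \<in> F"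
  shows "r * (r * real CARD('v) + real m * (real k - r)) * (real CARD('v) ^ 2 * real (card (D \<inter> E)) - real CARD('v) * real m ^ 2) =
    (r - s) * ((r * real CARD('v) + real m * (real k - r)) *
       (real CARD('v) ^ 2 * real (card (C \<inter> D \<inter> E))
     - real CARD('v) * real m * real (card (C \<inter> D)) - real CARD('v) * real m * real (card (C \<inter> E)) + real m ^ 3)
       - (real k - r) * (real CARD('v) * real (card (C \<inter> D)) - real m ^ 2) * (real CARD('v) * real (card (C \<inter> E)) - real m ^ 2))"
  using B_id[OF cocF[OF C] _ W_ES[OF D] W_ES[OF E]] cardC[OF C] dimES
  unfolding W_inner[OF D E] W_sum1[OF C] W_sum2[OF C] by simp

lemma G_pos: "r * real CARD('v) + real m * (real k - r) > 0"
  using r_pos r_k al_pos by (simp add: add_pos_nonneg)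

lemma Q1: assumes C: "C \<in> F" and D: "D \<in> F" and CD: "C \<noteq> D"
  shows "(r * real CARD('v) + real m * (real k - r)) * (real CARD('v) - 2 * real m)
     = (real k - r) * (real CARD('v) * real (card (C \<inter> D)) + real CARD('v) * real m - 2 * real m ^ 2)"
proof -
  define v where "v = real CARD('v)"
  define al where "al = real m"
  define h where "h = real k - r"
  define G where "G = r * v + al * h"
  define p where "p = real (card (C \<inter> D))"
  have e1: "r * G * (v^2 * al - v * al^2) = (r - s) * (G * (v^2 * p - v * al * p - v * al * p + al^3) - h * (v * p - al^2) * (v * p - al^2))"
    using B_W[OF C D D] cardC[OF D] unfolding v_def al_def h_def G_def p_def by simp
  have e2: "r * G * (v^2 * al - v * al^2) = (r - s) * (G * (v^2 * al - v * al * al - v * al * al + al^3) - h * (v * al - al^2) * (v * al - al^2))"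
    using B_W[OF C C C] cardC[OF C] unfolding v_def al_def h_def G_def p_def by simp
  have rs: "r - s \<noteq> 0" using r_pos s_neg by simp
  have X: "G * (v^2 * p - v * al * p - v * al * p + al^3) - h * (v * p - al^2) * (v * p - al^2)
     = G * (v^2 * al - v * al * al - v * al * al + al^3) - h * (v * al - al^2) * (v * al - al^2)"
    using e1 e2 rs by simp
  have pa: "p \<noteq> al"
  proof
    assume "p = al"
    then have "card (C \<inter> D) = card C" using cardC[OF C] unfolding p_def al_def by simp
    then have "C \<inter> D = C" by (intro card_subset_eq) auto
    then have "C \<subseteq> D" by auto
    then have "C = D" using cardC[OF C] cardC[OF D] by (intro card_subset_eq) auto
    then show False using CD by simp
  qed
  have "(p - al) * v * (G * (v - 2 * al) - h * (v * p + v * al - 2 * al^2)) = 0"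
  proof -
    have "(p - al) * v * (G * (v - 2 * al) - h * (v * p + v * al - 2 * al^2)) =
       (G * (v^2 * p - v * al * p - v * al * p + al^3) - h * (v * p - al^2) * (v * p - al^2))
     - (G * (v^2 * al - v * al * al - v * al * al + al^3) - h * (v * al - al^2) * (v * al - al^2))"
      by algebra
    then show ?thesis using X by simp
  qed
  moreover have "v \<noteq> 0" unfolding v_def by simp
  ultimately have "G * (v - 2 * al) = h * (v * p + v * al - 2 * al^2)" using pa by simp
  then show ?thesis unfolding v_def al_def h_def G_def p_def .
qed

lemma inter_lt: assumes C: "C \<in> F" and D: "D \<in> F" and CD: "C \<noteq> D"
  shows "card (C \<inter> D) < m"
proof -
  have le: "card (C \<inter> D) \<le> card C" by (rule card_mono) auto
  have "card (C \<inter> D) \<noteq> card C"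
  proof
    assume "card (C \<inter> D) = card C"
    then have "C \<inter> D = C" by (intro card_subset_eq) auto
    then have "C \<subseteq> D" by auto
    then have "C = D" using cardC[OF C] cardC[OF D] by (intro card_subset_eq) auto
    then show False using CD by simp
  qed
  then show ?thesis using le cardC[OF C] by simp
qed

lemma inter_eq: assumes "C \<in> F" "D \<in> F" "C \<noteq> D" "C' \<in> F" "D' \<in> F" "C' \<noteq> D'"
  shows "card (C \<inter> D) = card (C' \<inter> D')"
proof -
  have "(real k - r) * (real CARD('v) * real (card (C \<inter> D))) = (real k - r) * (real CARD('v) * real (card (C' \<inter> D')))"
    using Q1[OF assms(1-3)] Q1[OF assms(4-6)] by (simp add: algebra_simps)
  moreover have "real k - r \<noteq> 0" "real CARD('v) \<noteq> 0" using r_k by auto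
  ultimately show ?thesis by simp
qed

lemma two_el: "\<exists>C\<in>F. \<exists>D\<in>F. C \<noteq> D"
proof -
  have m0: "m > 0" using al_pos by simp
  have "F \<noteq> {}" using cardF by auto
  then obtain C where C: "C \<in> F" by blast
  have "card (F - {C}) = m" using cardF C by (simp add: card_Diff_singleton)
  then have "F - {C} \<noteq> {}" using m0 by (metis card.empty less_irrefl)
  then obtain D where "D \<in> F - {C}" by blast
  then show ?thesis using C by blast
qed

definition pp :: nat where "pp = (SOME p. \<forall>C\<in>F. \<forall>D\<in>F. C \<noteq> D \<longrightarrow> card (C \<inter> D) = p)"

lemma pp_prop: "C \<in> F \<Longrightarrow> D \<in> F \<Longrightarrow> C \<noteq> D \<Longrightarrow> card (C \<inter> D) = pp"
proof -
  obtain C0 D0 where cd: "C0 \<in> F" "D0 \<in> F" "C0 \<noteq> D0" using two_el by blast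
  have "\<forall>C\<in>F. \<forall>D\<in>F. C \<noteq> D \<longrightarrow> card (C \<inter> D) = card (C0 \<inter> D0)"
    using inter_eq cd by blast
  then have "\<forall>C\<in>F. \<forall>D\<in>F. C \<noteq> D \<longrightarrow> card (C \<inter> D) = pp"
    unfolding pp_def by (rule someI)
  then show "C \<in> F \<Longrightarrow> D \<in> F \<Longrightarrow> C \<noteq> D \<Longrightarrow> card (C \<inter> D) = pp" by blast
qed

lemma pp_lt: "pp < m"
proof -
  obtain C D where "C \<in> F" "D \<in> F" "C \<noteq> D" using two_el by blast
  then show ?thesis using inter_lt pp_prop by force
qed

lemma W_inner2: "D \<in> F \<Longrightarrow> E \<in> F \<Longrightarrow> W D \<bullet> W E =
   (if D = E then real CARD('v) ^ 2 * real m - real CARD('v) * real m ^ 2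
    else real CARD('v) ^ 2 * real pp - real CARD('v) * real m ^ 2)"
  using W_inner pp_prop cardC by auto

end

lemma sum_if_eq: assumes "finite S" "E \<in> S"
  shows "(\<Sum>D\<in>S. c D * (if D = E then (N::real) else Q)) = (N - Q) * c E + Q * (\<Sum>D\<in>S. c D)"
proof -
  have "(\<Sum>D\<in>S. c D * (if D = E then N else Q)) = (\<Sum>D\<in>S. (N - Q) * (if D = E then c D else 0) + Q * c D)"
    by (intro sum.cong) (auto simp: algebra_simps)
  also have "\<dots> = (N - Q) * c E + Q * (\<Sum>D\<in>S. c D)"
    using assms by (simp add: sum.distrib sum_distrib_left[symmetric])
  finally show ?thesis .
qed

lemma sum_if_neq: assumes "E \<notin> S"
  shows "(\<Sum>D\<in>S. c D * (if D = E then (N::real) else Q)) = Q * (\<Sum>D\<in>S. c D)"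
proof -
  have "(\<Sum>D\<in>S. c D * (if D = E then N else Q)) = (\<Sum>D\<in>S. Q * c D)"
    using assms by (intro sum.cong) auto
  then show ?thesis by (simp add: sum_distrib_left)
qed

context srg2 begin

lemma dot_comb: assumes E: "E \<in> F" and S: "S \<subseteq> F"
  shows "W E \<bullet> (\<Sum>D\<in>S. c D *\<^sub>R W D) = (\<Sum>D\<in>S. c D *
     (if D = E then real CARD('v) ^ 2 * real m - real CARD('v) * real m ^ 2
      else real CARD('v) ^ 2 * real pp - real CARD('v) * real m ^ 2))"
  unfolding inner_sum_right inner_scaleR_right
proof (intro sum.cong refl)
  fix D assume D: "D \<in> S"
  then have DF: "D \<in> F" using S by auto
  show "c D * (W E \<bullet> W D) = c D *
     (if D = E then real CARD('v) ^ 2 * real m - real CARD('v) * real m ^ 2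
      else real CARD('v) ^ 2 * real pp - real CARD('v) * real m ^ 2)"
    using W_inner2[OF E DF] by (cases "D = E") auto
qed

lemma NN_pos: "real CARD('v) ^ 2 * real m - real CARD('v) * real m ^ 2 > 0"
proof -
  have "real CARD('v) ^ 2 * real m - real CARD('v) * real m ^ 2 = real CARD('v) * real m * (real CARD('v) - real m)"
    by (simp add: power2_eq_square algebra_simps)
  then show ?thesis using al_pos al_lt_v by simp
qed

lemma NQ_ne: "(real CARD('v) ^ 2 * real m - real CARD('v) * real m ^ 2) - (real CARD('v) ^ 2 * real pp - real CARD('v) * real m ^ 2) > 0"
  using pp_lt by simp

lemma R1: "(real CARD('v) ^ 2 * real m - real CARD('v) * real m ^ 2) + real m * (real CARD('v) ^ 2 * real pp - real CARD('v) * real m ^ 2) = 0"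
proof -
  define NN where "NN = real CARD('v) ^ 2 * real m - real CARD('v) * real m ^ 2"
  define QQ where "QQ = real CARD('v) ^ 2 * real pp - real CARD('v) * real m ^ 2"
  define al where "al = real m"
  have Npos: "NN > 0" using NN_pos NN_def by simp
  have NQ: "NN - QQ \<noteq> 0" using NQ_ne NN_def QQ_def by simp
  obtain C0 where C0: "C0 \<in> F" using two_el by blast
  define F' where "F' = F - {C0}"
  have F'F: "F' \<subseteq> F" unfolding F'_def by auto
  have fF': "finite F'" by simp
  have cF': "card F' = m" unfolding F'_def using cardF C0 by (simp add: card_Diff_singleton)
  have C0F': "C0 \<notin> F'" unfolding F'_def by simp
  have dc: "\<And>E c. E \<in> F \<Longrightarrow> W E \<bullet> (\<Sum>D\<in>F'. c D *\<^sub>R W D) = (\<Sum>D\<in>F'. c D * (if D = E then NN else QQ))"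
    using dot_comb F'F unfolding NN_def QQ_def by blast
  have case1: "NN + (al - 1) * QQ \<noteq> 0"
  proof
    assume h: "NN + (al - 1) * QQ = 0"
    let ?w = "(\<Sum>D\<in>F'. 1 *\<^sub>R W D)"
    have "?w \<bullet> ?w = (\<Sum>E\<in>F'. W E \<bullet> ?w)" by (simp add: inner_sum_left)
    also have "\<dots> = (\<Sum>E\<in>F'. (NN - QQ) + QQ * al)"
      apply (rule sum.cong[OF refl])
      apply (subst dc) using F'F apply blast
      apply (subst sum_if_eq[OF fF']) using cF' al_def by auto
    also have "\<dots> = al * (NN + (al - 1) * QQ)" using cF' al_def by (simp add: algebra_simps)
    finally have "?w = 0" using h by simp
    then have "W C0 \<bullet> ?w = 0" by simp
    moreover have "W C0 \<bullet> ?w = QQ * al"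
      apply (subst dc[OF C0]) apply (subst sum_if_neq[OF C0F']) using cF' al_def by simp
    ultimately have "QQ = 0" using al_pos al_def by simp
    then show False using h Npos by simp
  qed
  have indep: "\<And>c. (\<Sum>D\<in>F'. c D *\<^sub>R W D) = 0 \<Longrightarrow> \<forall>D\<in>F'. c D = 0"
  proof -
    fix c assume z: "(\<Sum>D\<in>F'. c D *\<^sub>R W D) = 0"
    have e: "\<And>E. E \<in> F' \<Longrightarrow> (NN - QQ) * c E + QQ * (\<Sum>D\<in>F'. c D) = 0"
    proof -
      fix E assume E: "E \<in> F'"
      have "0 = W E \<bullet> (\<Sum>D\<in>F'. c D *\<^sub>R W D)" using z by simp
      also have "\<dots> = (NN - QQ) * c E + QQ * (\<Sum>D\<in>F'. c D)"
        using dc[of E c] E F'F sum_if_eq[OF fF' E] by auto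
      finally show "(NN - QQ) * c E + QQ * (\<Sum>D\<in>F'. c D) = 0" by simp
    qed
    have "(\<Sum>E\<in>F'. (NN - QQ) * c E + QQ * (\<Sum>D\<in>F'. c D)) = 0" using e by simp
    moreover have "(\<Sum>E\<in>F'. (NN - QQ) * c E + QQ * (\<Sum>D\<in>F'. c D)) = (NN - QQ) * (\<Sum>D\<in>F'. c D) + real (card F') * (QQ * (\<Sum>D\<in>F'. c D))"
      by (simp add: sum.distrib sum_distrib_left[symmetric])
    ultimately have "(NN + (al - 1) * QQ) * (\<Sum>D\<in>F'. c D) = 0"
      using cF' al_def by (simp add: algebra_simps)
    then have "(\<Sum>D\<in>F'. c D) = 0" using case1 by simp
    then show "\<forall>D\<in>F'. c D = 0" using e NQ by simp
  qed
  have "\<exists>c. W C0 = (\<Sum>D\<in>F'. c D *\<^sub>R W D)"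
  proof (rule spanning[OF fF'])
    show "card F' = dim ES" using cF' dimES by simp
    show "\<And>i. i \<in> F' \<Longrightarrow> W i \<in> ES" using W_ES F'F by blast
    show "\<And>c. (\<Sum>i\<in>F'. c i *\<^sub>R W i) = 0 \<Longrightarrow> \<forall>i\<in>F'. c i = 0" by (rule indep)
    show "W C0 \<in> ES" using W_ES C0 by blast
  qed
  then obtain c where ce: "W C0 = (\<Sum>D\<in>F'. c D *\<^sub>R W D)" by blast
  define S where "S = (\<Sum>D\<in>F'. c D)"
  have e1: "\<And>E. E \<in> F' \<Longrightarrow> QQ = (NN - QQ) * c E + QQ * S"
  proof -
    fix E assume E: "E \<in> F'"
    have "W E \<bullet> W C0 = QQ" using W_inner2 E F'F C0 C0F' NN_def QQ_def by auto
    moreover have "W E \<bullet> W C0 = (NN - QQ) * c E + QQ * S"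
      unfolding ce S_def using dc[of E c] E F'F sum_if_eq[OF fF' E] by auto
    ultimately show "QQ = (NN - QQ) * c E + QQ * S" by simp
  qed
  have e2: "al * QQ = (NN - QQ) * S + al * QQ * S"
  proof -
    have "(\<Sum>E\<in>F'. QQ) = (\<Sum>E\<in>F'. (NN - QQ) * c E + QQ * S)" using e1 by simp
    moreover have "(\<Sum>E\<in>F'. (NN - QQ) * c E + QQ * S) = (NN - QQ) * S + real (card F') * (QQ * S)"
      unfolding S_def by (simp add: sum.distrib sum_distrib_left[symmetric])
    ultimately show ?thesis using cF' al_def by (simp add: algebra_simps)
  qed
  have e3: "NN = QQ * S"
  proof -
    have "W C0 \<bullet> W C0 = NN" using W_inner2 C0 NN_def by simp
    moreover have "W C0 \<bullet> W C0 = QQ * S"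
      apply (subst (2) ce) apply (subst dc[OF C0]) apply (subst sum_if_neq[OF C0F']) using S_def by simp
    ultimately show ?thesis by simp
  qed
  have "(NN - QQ) * (NN + al * QQ) = 0"
  proof -
    have "(NN - QQ) * (NN + al * QQ) = NN * ((NN - QQ) + al * QQ) - al * QQ * QQ" by algebra
    also have "\<dots> = QQ * ((NN - QQ) * S + al * QQ * S) - al * QQ * QQ" using e3 by (simp add: algebra_simps)
    also have "\<dots> = 0" using arg_cong[OF e2, of "\<lambda>x. QQ * x"] by (simp add: algebra_simps)
    finally show ?thesis .
  qed
  then have "NN + al * QQ = 0" using NQ by simp
  then show ?thesis unfolding NN_def QQ_def al_def .
qed

lemma R1': "real CARD('v) * real pp = real m ^ 2 + real m - real CARD('v)"
proof -
  have "real CARD('v) * real m * (real CARD('v) * real pp - (real m ^ 2 + real m - real CARD('v))) = 0"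
    using R1 by (simp add: power2_eq_square algebra_simps)
  then show ?thesis using al_pos by simp
qed

lemma R2: "real CARD('v) * (\<Sum>C\<in>F. ind C x) = real m * (real m + 1)"
proof -
  define NN where "NN = real CARD('v) ^ 2 * real m - real CARD('v) * real m ^ 2"
  define QQ where "QQ = real CARD('v) ^ 2 * real pp - real CARD('v) * real m ^ 2"
  let ?w = "(\<Sum>D\<in>F. 1 *\<^sub>R W D)"
  have fF: "finite F" by simp
  have "?w \<bullet> ?w = (\<Sum>E\<in>F. W E \<bullet> ?w)" by (simp add: inner_sum_left)
  also have "\<dots> = (\<Sum>E\<in>F. (NN - QQ) + QQ * real (Suc m))"
    apply (rule sum.cong[OF refl])
    apply (subst dot_comb) apply simp apply simp
    apply (subst sum_if_eq[OF fF]) using cardF NN_def QQ_def by auto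
  also have "\<dots> = real (Suc m) * (NN + real m * QQ)" using cardF by (simp add: algebra_simps)
  also have "\<dots> = 0" using R1 NN_def QQ_def by simp
  finally have w0: "?w = 0" by simp
  have "0 = ?w $ x" unfolding w0 by simp
  also have "\<dots> = (\<Sum>C\<in>F. real CARD('v) * ind C x - real m)" by (simp add: W_def)
  also have "\<dots> = real CARD('v) * (\<Sum>C\<in>F. ind C x) - real (Suc m) * real m"
    using cardF by (simp add: sum_subtractf sum_distrib_left)
  finally show ?thesis by (simp add: algebra_simps)
qed

lemma triple_eq:
  assumes "C \<in> F" "D \<in> F" "E \<in> F" "C \<noteq> D" "C \<noteq> E" "D \<noteq> E"
    and "C' \<in> F" "D' \<in> F" "E' \<in> F" "C' \<noteq> D'" "C' \<noteq> E'" "D' \<noteq> E'"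
  shows "card (C \<inter> D \<inter> E) = card (C' \<inter> D' \<inter> E')"
proof -
  define G where "G = r * real CARD('v) + real m * (real k - r)"
  define X where "X = (\<lambda>T::nat. (r - s) * (G * (real CARD('v) ^ 2 * real T
     - real CARD('v) * real m * real pp - real CARD('v) * real m * real pp + real m ^ 3)
       - (real k - r) * (real CARD('v) * real pp - real m ^ 2) * (real CARD('v) * real pp - real m ^ 2)))"
  have "X (card (C \<inter> D \<inter> E)) = X (card (C' \<inter> D' \<inter> E'))"
    using B_W[of C D E] B_W[of C' D' E'] assms pp_prop unfolding X_def G_def by auto
  then have "(r - s) * G * real CARD('v) ^ 2 * real (card (C \<inter> D \<inter> E)) = (r - s) * G * real CARD('v) ^ 2 * real (card (C' \<inter> D' \<inter> E'))"
    unfolding X_def by (simp add: algebra_simps)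
  moreover have "(r - s) * G * real CARD('v) ^ 2 \<noteq> 0" using G_pos r_pos s_neg unfolding G_def by simp
  ultimately show ?thesis by simp
qed

definition ll :: nat where
  "ll = (SOME l. \<forall>C\<in>F. \<forall>D\<in>F. \<forall>E\<in>F. C \<noteq> D \<and> C \<noteq> E \<and> D \<noteq> E \<longrightarrow> card (C \<inter> D \<inter> E) = l)"

lemma ll_prop: assumes "C \<in> F" "D \<in> F" "E \<in> F" "C \<noteq> D" "C \<noteq> E" "D \<noteq> E"
  shows "card (C \<inter> D \<inter> E) = ll"
proof -
  have "\<forall>C'\<in>F. \<forall>D'\<in>F. \<forall>E'\<in>F. C' \<noteq> D' \<and> C' \<noteq> E' \<and> D' \<noteq> E' \<longrightarrow> card (C' \<inter> D' \<inter> E') = card (C \<inter> D \<inter> E)"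
    using triple_eq assms by metis
  then have "\<forall>C'\<in>F. \<forall>D'\<in>F. \<forall>E'\<in>F. C' \<noteq> D' \<and> C' \<noteq> E' \<and> D' \<noteq> E' \<longrightarrow> card (C' \<inter> D' \<inter> E') = ll"
    unfolding ll_def by (rule someI)
  then show ?thesis using assms by blast
qed

lemma ind_sq: "ind D x * ind D x = ind D x" by (simp add: ind_def)

lemma rep: assumes C0: "C0 \<in> F" and x: "x \<in> C0"
  shows "(\<Sum>D\<in>F - {C0}. ind D x) = real pp"
proof -
  have "(\<Sum>D\<in>F. ind D x) = ind C0 x + (\<Sum>D\<in>F - {C0}. ind D x)"
    using C0 by (simp add: sum.remove)
  then have "real CARD('v) * (1 + (\<Sum>D\<in>F - {C0}. ind D x)) = real m * (real m + 1)"
    using R2[of x] x by (simp add: ind_def)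
  moreover have "real CARD('v) * (1 + real pp) = real m * (real m + 1)"
    using R1' by (simp add: algebra_simps power2_eq_square)
  ultimately have "real CARD('v) * (1 + (\<Sum>D\<in>F - {C0}. ind D x)) = real CARD('v) * (1 + real pp)" by simp
  then have "1 + (\<Sum>D\<in>F - {C0}. ind D x) = 1 + real pp" by (subst (asm) mult_left_cancel) auto
  then show ?thesis by simp
qed

lemma ll_pp: "(real m - 1) * real ll = real pp * (real pp - 1)"
proof -
  obtain C0 D where cd: "C0 \<in> F" "D \<in> F" "C0 \<noteq> D" using two_el by blast
  define S where "S = F - {C0, D}"
  have fS: "finite S" by simp
  have cS: "card S = m - 1" unfolding S_def using cardF cd by (simp add: card_Diff_subset)
  have "(\<Sum>E\<in>S. real (card (C0 \<inter> D \<inter> E))) = (\<Sum>E\<in>S. real ll)"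
    using ll_prop cd unfolding S_def by (intro sum.cong) auto
  also have "\<dots> = (real m - 1) * real ll" using cS al_pos by (simp add: of_nat_diff)
  finally have l1: "(\<Sum>E\<in>S. real (card (C0 \<inter> D \<inter> E))) = (real m - 1) * real ll" .
  have "(\<Sum>E\<in>S. real (card (C0 \<inter> D \<inter> E))) = (\<Sum>E\<in>S. \<Sum>z\<in>C0 \<inter> D. ind E z)"
    by (intro sum.cong refl) (simp add: sum_ind1 Int_commute Int_left_commute)
  also have "\<dots> = (\<Sum>z\<in>C0 \<inter> D. \<Sum>E\<in>S. ind E z)" by (rule sum.swap)
  also have "\<dots> = (\<Sum>z\<in>C0 \<inter> D. real pp - 1)"
  proof (intro sum.cong refl)
    fix z assume z: "z \<in> C0 \<inter> D"
    have "(\<Sum>E\<in>F - {C0}. ind E z) = ind D z + (\<Sum>E\<in>S. ind E z)"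
    proof -
      have "D \<in> F - {C0}" using cd by auto
      then have "(\<Sum>E\<in>F - {C0}. ind E z) = ind D z + (\<Sum>E\<in>F - {C0} - {D}. ind E z)"
        by (simp add: sum.remove)
      moreover have "F - {C0} - {D} = S" unfolding S_def by auto
      ultimately show ?thesis by simp
    qed
    then show "(\<Sum>E\<in>S. ind E z) = real pp - 1" using rep[OF cd(1), of z] z by (simp add: ind_def)
  qed
  also have "\<dots> = real pp * (real pp - 1)" using pp_prop[OF cd] by simp
  finally show ?thesis using l1 by simp
qed

lemma pairs: assumes C0: "C0 \<in> F" and x: "x \<in> C0" and y: "y \<in> C0" and xy: "x \<noteq> y"
  shows "card {D\<in>F - {C0}. x \<in> D \<and> y \<in> D} = ll"
proof -
  define F' where "F' = F - {C0}"
  define Y where "Y = C0 - {x}"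
  define lam where "lam = (\<lambda>y. \<Sum>D\<in>F'. ind D x * ind D y)"
  have fF': "finite F'" by simp
  have fY: "finite Y" by simp
  have cY: "card Y = m - 1" unfolding Y_def using cardC[OF C0] x by simp
  have DF: "\<And>D. D \<in> F' \<Longrightarrow> D \<in> F \<and> D \<noteq> C0" unfolding F'_def by auto
  have rp: "(\<Sum>D\<in>F'. ind D x) = real pp" unfolding F'_def by (rule rep[OF C0 x])
  have inY: "\<And>g. (\<Sum>y\<in>C0. g y) = g x + (\<Sum>y\<in>Y. g y)"
    unfolding Y_def using x by (simp add: sum.remove)
  have S1: "(\<Sum>y\<in>Y. lam y) = real pp * (real pp - 1)"
  proof -
    have "(\<Sum>y\<in>Y. lam y) = (\<Sum>D\<in>F'. ind D x * (\<Sum>y\<in>Y. ind D y))"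
      unfolding lam_def by (subst sum.swap) (simp add: sum_distrib_left)
    also have "\<dots> = (\<Sum>D\<in>F'. (real pp - 1) * ind D x)"
    proof (intro sum.cong refl)
      fix D assume D: "D \<in> F'"
      have "(\<Sum>y\<in>C0. ind D y) = real pp" using pp_prop[of C0 D] DF[OF D] C0 by (auto simp: sum_ind1)
      then have "(\<Sum>y\<in>Y. ind D y) = real pp - ind D x" using inY[of "ind D"] by simp
      then show "ind D x * (\<Sum>y\<in>Y. ind D y) = (real pp - 1) * ind D x"
        by (simp add: ind_def)
    qed
    also have "\<dots> = real pp * (real pp - 1)" using rp by (simp add: sum_distrib_left[symmetric])
    finally show ?thesis .
  qed
  have S2: "(\<Sum>y\<in>Y. lam y * lam y) = (real pp - real ll) * real pp + (real ll - 1) * real pp * real pp"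
  proof -
    have "(\<Sum>y\<in>Y. lam y * lam y) = (\<Sum>y\<in>Y. \<Sum>D\<in>F'. \<Sum>E\<in>F'. (ind D x * ind E x) * (ind D y * ind E y))"
      unfolding lam_def by (simp add: sum_product algebra_simps)
    also have "\<dots> = (\<Sum>D\<in>F'. \<Sum>E\<in>F'. (ind D x * ind E x) * (\<Sum>y\<in>Y. ind D y * ind E y))"
    proof -
      have "(\<Sum>y\<in>Y. \<Sum>D\<in>F'. \<Sum>E\<in>F'. (ind D x * ind E x) * (ind D y * ind E y))
          = (\<Sum>D\<in>F'. \<Sum>y\<in>Y. \<Sum>E\<in>F'. (ind D x * ind E x) * (ind D y * ind E y))" by (rule sum.swap)
      also have "\<dots> = (\<Sum>D\<in>F'. \<Sum>E\<in>F'. \<Sum>y\<in>Y. (ind D x * ind E x) * (ind D y * ind E y))"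
        by (intro sum.cong refl) (rule sum.swap)
      finally show ?thesis by (simp add: sum_distrib_left)
    qed
    also have "\<dots> = (\<Sum>D\<in>F'. \<Sum>E\<in>F'. ind E x * (ind D x * (if E = D then real pp - 1 else real ll - 1)))"
    proof (intro sum.cong refl)
      fix D E assume D: "D \<in> F'" and E: "E \<in> F'"
      have "(\<Sum>y\<in>C0. ind D y * ind E y) = (if E = D then real pp else real ll)"
      proof (cases "E = D")
        case True then show ?thesis using pp_prop[of C0 D] DF[OF D] C0 by (auto simp: sum_ind2)
      next
        case False then show ?thesis using ll_prop[of C0 D E] DF[OF D] DF[OF E] C0 by (auto simp: sum_ind2)
      qed
      then have "(\<Sum>y\<in>Y. ind D y * ind E y) = (if E = D then real pp else real ll) - ind D x * ind E x"
        using inY[of "\<lambda>y. ind D y * ind E y"] by simp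
      then show "(ind D x * ind E x) * (\<Sum>y\<in>Y. ind D y * ind E y) = ind E x * (ind D x * (if E = D then real pp - 1 else real ll - 1))"
        by (simp add: ind_def)
    qed
    also have "\<dots> = (\<Sum>D\<in>F'. ind D x * ((real pp - real ll) * ind D x + (real ll - 1) * real pp))"
    proof (intro sum.cong refl)
      fix D assume D: "D \<in> F'"
      have "(\<Sum>E\<in>F'. ind E x * (ind D x * (if E = D then real pp - 1 else real ll - 1)))
          = ind D x * (\<Sum>E\<in>F'. ind E x * (if E = D then real pp - 1 else real ll - 1))"
        by (simp add: sum_distrib_left algebra_simps)
      also have "\<dots> = ind D x * (((real pp - 1) - (real ll - 1)) * ind D x + (real ll - 1) * real pp)"
        using sum_if_eq[OF fF' D, of "\<lambda>E. ind E x"] rp by simp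
      finally show "(\<Sum>E\<in>F'. ind E x * (ind D x * (if E = D then real pp - 1 else real ll - 1)))
         = ind D x * ((real pp - real ll) * ind D x + (real ll - 1) * real pp)" by simp
    qed
    also have "\<dots> = (\<Sum>D\<in>F'. ((real pp - real ll) + (real ll - 1) * real pp) * ind D x)"
      by (intro sum.cong refl) (simp add: ind_def algebra_simps)
    also have "\<dots> = ((real pp - real ll) + (real ll - 1) * real pp) * real pp"
      using rp by (simp add: sum_distrib_left[symmetric])
    finally show ?thesis by (simp add: algebra_simps)
  qed
  have "(\<Sum>y\<in>Y. (lam y - real ll)^2) = (\<Sum>y\<in>Y. lam y * lam y) - 2 * real ll * (\<Sum>y\<in>Y. lam y) + real (card Y) * (real ll * real ll)"
    by (simp add: power2_eq_square algebra_simps sum.distrib sum_subtractf sum_distrib_left sum_distrib_right)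
  also have "\<dots> = 0"
  proof -
    have cy: "real (card Y) = real m - 1" using cY al_pos by (simp add: of_nat_diff)
    have q: "(real m - 1) * (real ll * real ll) = real ll * (real pp * (real pp - 1))"
      using ll_pp by (metis mult.assoc mult.commute)
    show ?thesis unfolding S1 S2 cy q by (simp add: algebra_simps)
  qed
  finally have "\<forall>y\<in>Y. (lam y - real ll)^2 = 0" by (subst sum_nonneg_eq_0_iff[symmetric]) auto
  then have "lam y = real ll" using y xy unfolding Y_def by auto
  moreover have "lam y = real (card {D\<in>F'. x \<in> D \<and> y \<in> D})"
  proof -
    have "lam y = (\<Sum>D\<in>F'. if x \<in> D \<and> y \<in> D then 1 else 0)"
      unfolding lam_def by (intro sum.cong refl) (simp add: ind_def)
    also have "\<dots> = real (card {D\<in>F'. x \<in> D \<and> y \<in> D})"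
      by (simp add: sum.If_cases Int_def)
    finally show ?thesis .
  qed
  ultimately show ?thesis unfolding F'_def by simp
qed

lemma ll_pp_ne: "ll = pp \<Longrightarrow> pp = 0"
proof -
  assume e: "ll = pp"
  have "(real m - 1) * real pp = real pp * (real pp - 1)" using ll_pp e by simp
  then have "real pp * (real m - real pp) = 0" by (simp add: algebra_simps)
  then show "pp = 0" using pp_lt by simp
qed

lemma design: "\<exists>B. symmetric_design m pp ll B"
proof -
  obtain C0 where C0: "C0 \<in> F" using two_el by blast
  obtain \<phi> where bij: "bij_betw \<phi> C0 {0..<card C0}" using ex_bij_betw_finite_nat[of C0] by auto
  then have bij': "bij_betw \<phi> C0 {..<m}" using cardC[OF C0] by (simp add: lessThan_atLeast0)
  have inj: "inj_on \<phi> C0" using bij' by (rule bij_betw_imp_inj_on)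
  have img: "\<phi> ` C0 = {..<m}" using bij' by (rule bij_betw_imp_surj_on)
  define F' where "F' = F - {C0}"
  define f where "f = (\<lambda>D. \<phi> ` (C0 \<inter> D))"
  define B where "B = f ` F'"
  have DF: "\<And>D. D \<in> F' \<Longrightarrow> D \<in> F \<and> D \<noteq> C0" unfolding F'_def by auto
  have cf: "\<And>D. D \<in> F' \<Longrightarrow> card (f D) = pp"
  proof -
    fix D assume D: "D \<in> F'"
    have "card (f D) = card (C0 \<inter> D)" unfolding f_def
      by (rule card_image) (rule inj_on_subset[OF inj], auto)
    then show "card (f D) = pp" using pp_prop[OF C0, of D] DF[OF D] by auto
  qed
  have fint: "\<And>D E. f D \<inter> f E = \<phi> ` (C0 \<inter> D \<inter> E)"
  proof -
    fix D E
    have "f D \<inter> f E = \<phi> ` ((C0 \<inter> D) \<inter> (C0 \<inter> E))"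
      unfolding f_def by (rule inj_on_image_Int[OF inj, symmetric]) auto
    also have "(C0 \<inter> D) \<inter> (C0 \<inter> E) = C0 \<inter> D \<inter> E" by auto
    finally show "f D \<inter> f E = \<phi> ` (C0 \<inter> D \<inter> E)" .
  qed
  have mem: "\<phi> z \<in> f D \<longleftrightarrow> z \<in> D" if z: "z \<in> C0" for z D
    unfolding f_def using inj_on_image_mem_iff[OF inj z, of "C0 \<inter> D"] z by auto
  have "symmetric_design m pp ll B"
    unfolding symmetric_design_def
  proof (intro conjI)
    show "\<forall>b\<in>B. b \<subseteq> {..<m} \<and> card b = pp"
    proof
      fix b assume "b \<in> B"
      then obtain D where D: "D \<in> F'" "b = f D" unfolding B_def by blast
      have "f D \<subseteq> \<phi> ` C0" unfolding f_def by blast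
      then show "b \<subseteq> {..<m} \<and> card b = pp" using D cf img by simp
    qed
    show "\<exists>l. \<forall>b1\<in>B. \<forall>b2\<in>B. b1 \<noteq> b2 \<longrightarrow> card (b1 \<inter> b2) = l"
    proof (intro exI ballI impI)
      fix b1 b2 assume b: "b1 \<in> B" "b2 \<in> B" "b1 \<noteq> b2"
      then obtain D E where DE: "D \<in> F'" "E \<in> F'" "b1 = f D" "b2 = f E" unfolding B_def by auto
      then have "D \<noteq> E" using b by auto
      have "card (b1 \<inter> b2) = card (C0 \<inter> D \<inter> E)"
        unfolding DE fint by (rule card_image) (rule inj_on_subset[OF inj], auto)
      also have "\<dots> = ll" using ll_prop[OF C0, of D E] DF[OF DE(1)] DF[OF DE(2)] \<open>D \<noteq> E\<close> by auto
      finally show "card (b1 \<inter> b2) = ll" .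
    qed
    show "\<forall>x<m. \<forall>y<m. x \<noteq> y \<longrightarrow> card {b \<in> B. x \<in> b \<and> y \<in> b} = ll"
    proof (intro allI impI)
      fix x y assume xy: "x < m" "y < m" "x \<noteq> y"
      have "x \<in> \<phi> ` C0" "y \<in> \<phi> ` C0" using img xy by auto
      then obtain x' y' where x': "x' \<in> C0" "\<phi> x' = x" and y': "y' \<in> C0" "\<phi> y' = y" by blast
      have x'y': "x' \<noteq> y'" using x' y' xy by auto
      have set_eq: "{b \<in> B. x \<in> b \<and> y \<in> b} = f ` {D\<in>F'. x' \<in> D \<and> y' \<in> D}"
      proof (rule set_eqI, rule iffI)
        fix b assume "b \<in> {b \<in> B. x \<in> b \<and> y \<in> b}"
        then obtain D where D: "D \<in> F'" "b = f D" "x \<in> f D" "y \<in> f D" unfolding B_def by blast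
        then have "x' \<in> D" "y' \<in> D" using mem[OF x'(1), of D] mem[OF y'(1), of D] x'(2) y'(2) by simp_all
        then show "b \<in> f ` {D\<in>F'. x' \<in> D \<and> y' \<in> D}" using D by blast
      next
        fix b assume "b \<in> f ` {D\<in>F'. x' \<in> D \<and> y' \<in> D}"
        then obtain D where D: "D \<in> F'" "b = f D" "x' \<in> D" "y' \<in> D" by blast
        then have "x \<in> f D" "y \<in> f D" using mem[OF x'(1), of D] mem[OF y'(1), of D] x'(2) y'(2) by simp_all
        then show "b \<in> {b \<in> B. x \<in> b \<and> y \<in> b}" using D unfolding B_def by blast
      qed
      show "card {b \<in> B. x \<in> b \<and> y \<in> b} = ll"
      proof (cases "ll = pp")
        case True
        then have p0: "pp = 0" by (rule ll_pp_ne)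
        have "f D = {}" if D: "D \<in> F'" for D
        proof -
          have "finite (f D)" unfolding f_def by simp
          then show ?thesis using cf[OF D] p0 by simp
        qed
        then have e: "{b \<in> B. x \<in> b \<and> y \<in> b} = {}" unfolding B_def by auto
        show ?thesis unfolding e using True p0 by simp
      next
        case False
        have "inj_on f F'"
        proof (rule inj_onI, rule ccontr)
          fix D E assume DE: "D \<in> F'" "E \<in> F'" "f D = f E" "D \<noteq> E"
          have "card (f D \<inter> f E) = card (C0 \<inter> D \<inter> E)"
            unfolding fint by (rule card_image) (rule inj_on_subset[OF inj], auto)
          also have "\<dots> = ll" using ll_prop[OF C0, of D E] DF[OF DE(1)] DF[OF DE(2)] DE(4) by auto
          finally have "ll = pp" using cf[OF DE(1)] DE(3) by simp
          then show False using False by simp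
        qed
        then have "card {b \<in> B. x \<in> b \<and> y \<in> b} = card {D\<in>F'. x' \<in> D \<and> y' \<in> D}"
          unfolding set_eq by (intro card_image) (rule inj_on_subset[of f F'], auto)
        also have "\<dots> = ll" unfolding F'_def by (rule pairs[OF C0 x'(1) y'(1) x'y'])
        finally show ?thesis .
      qed
    qed
  qed
  then show ?thesis by blast
qed

lemma s_int: "\<exists>n::nat. s = - real n"
proof -
  obtain C where C: "C \<in> F" using two_el by blast
  have "card C < CARD('v)" using al_lt_v cardC[OF C] by simp
  then have "C \<noteq> UNIV" by auto
  then obtain x where x: "x \<notin> C" by blast
  have "nb C x = - s" using delsarte_nb[OF cocF[OF C]] cardC[OF C] szrel x by simp
  moreover have "nb C x = real (card (C \<inter> {y. adj x y}))"
  proof -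
    have "nb C x = (\<Sum>y\<in>C. ind {y. adj x y} y)" unfolding nb_def a_def ind_def by simp
    then show ?thesis by (simp add: sum_ind1)
  qed
  ultimately show ?thesis by (metis minus_minus)
qed

end


lemma alg_K:
  fixes r s k v m p mu :: real
  assumes r: "r > 0" and s: "s < 0" and rk: "r < k" and v: "v > 0"
    and hmu: "mu = k + r * s" and hv: "v * mu = (k - r) * (k - s)" and hm: "m * (k - s) = - v * s"
    and q1: "(r * v + m * (k - r)) * (v - 2 * m) = (k - r) * (v * p + v * m - 2 * m^2)"
    and r1: "v * p = m^2 + m - v"
  shows "k * (r + 1) = s * (s - r)"
proof -
  define K where "K = k - s"
  define h where "h = k - r"
  have K: "K > 0" using s rk r unfolding K_def by simp
  have h: "h > 0" using rk unfolding h_def by simp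
  have meq: "m = - v * s / K" using hm K unfolding K_def by (simp add: field_simps)
  have e0: "(r * v + m * h) * (v - 2 * m) = h * (v - m) * (m - 1)"
  proof -
    have "h * (v * p + v * m - 2 * m^2) = h * (m^2 + m - v + v * m - 2 * m^2)" using r1 by simp
    also have "\<dots> = h * (v - m) * (m - 1)" by (simp add: algebra_simps power2_eq_square)
    finally show ?thesis using q1 unfolding h_def by simp
  qed
  have mK: "m * K = - v * s" using hm unfolding K_def .
  have lhs: "K^2 * ((r * v + m * h) * (v - 2 * m)) = v^2 * k * (r - s) * (k + s)"
  proof -
    have "K^2 * ((r * v + m * h) * (v - 2 * m)) = (r * v * K + (m * K) * h) * (v * K - 2 * (m * K))"
      by (simp add: power2_eq_square algebra_simps)
    also have "\<dots> = (r * v * K + (- v * s) * h) * (v * K - 2 * (- v * s))" unfolding mK ..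
    also have "\<dots> = v^2 * k * (r - s) * (k + s)" unfolding K_def h_def by (simp add: power2_eq_square algebra_simps)
    finally show ?thesis .
  qed
  have rhs: "K^2 * (h * (v - m) * (m - 1)) = h * v * k * (- s * v - K)"
  proof -
    have "K^2 * (h * (v - m) * (m - 1)) = h * (v * K - m * K) * (m * K - K)"
      by (simp add: power2_eq_square algebra_simps)
    also have "\<dots> = h * (v * K - (- v * s)) * ((- v * s) - K)" unfolding mK ..
    also have "\<dots> = h * v * k * (- s * v - K)" unfolding K_def by (simp add: power2_eq_square algebra_simps)
    finally show ?thesis .
  qed
  have "K^2 * ((r * v + m * h) * (v - 2 * m)) = K^2 * (h * (v - m) * (m - 1))" using e0 by simp
  then have ee: "v^2 * k * (r - s) * (k + s) = h * v * k * (- s * v - K)" using lhs rhs by simp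
  have "v * k * (v * (r - s) * (k + s) + h * (s * v + K)) = v^2 * k * (r - s) * (k + s) - h * v * k * (- s * v - K)"
    by (simp add: algebra_simps power2_eq_square)
  then have "v * k * (v * (r - s) * (k + s) + h * (s * v + K)) = 0" using ee by simp
  moreover have "v * k \<noteq> 0" using v r rk by simp
  ultimately have e1: "v * (r - s) * (k + s) + h * (s * v + K) = 0" by simp
  have hv': "v * mu = h * K" using hv unfolding h_def K_def .
  have "mu * (v * (r - s) * (k + s) + h * (s * v + K)) = (v * mu) * (r - s) * (k + s) + h * (s * (v * mu) + K * mu)"
    by (simp add: algebra_simps)
  also have "\<dots> = h * K * ((r - s) * (k + s) + s * h + mu)" unfolding hv' by (simp add: algebra_simps)
  finally have "h * K * ((r - s) * (k + s) + s * h + mu) = mu * (v * (r - s) * (k + s) + h * (s * v + K))" by simp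
  then have "h * K * ((r - s) * (k + s) + s * h + mu) = 0" using e1 by simp
  then have "(r - s) * (k + s) + s * h + mu = 0" using h K by simp
  then show ?thesis using hmu unfolding h_def by (simp add: algebra_simps)
qed

lemma alg_forms:
  fixes r s k v m p l mu :: real
  assumes r: "r > 0" and s: "s < 0" and rk: "r < k" and v: "v > 0"
    and hmu: "mu = k + r * s" and hv: "v * mu = (k - r) * (k - s)" and hm: "m * (k - s) = - v * s"
    and r1: "v * p = m^2 + m - v" and kK: "k * (r + 1) = s * (s - r)"
    and LL: "(m - 1) * l = p * (p - 1)" and m1: "m \<noteq> 1"
  shows "r^2 + s < 0" "m = (r^2 + r * s + r - s^2) / (r^2 + s)" "p = ((s + 1) * r) / (r^2 + s)"
    "l = (- (r^2) + r) / (r^2 + s)"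
proof -
  define K where "K = k - s"
  define h where "h = k - r"
  define D where "D = r^2 + s"
  have K: "K > 0" using s rk r unfolding K_def by simp
  have h: "h > 0" using rk unfolding h_def by simp
  have mu_pos: "mu > 0"
  proof -
    have "v * mu > 0" using hv h K unfolding h_def K_def by simp
    then show ?thesis using v by (simp add: zero_less_mult_iff)
  qed
  have muD: "mu * (r + 1) = s * D"
  proof -
    have "mu * (r + 1) = k * (r + 1) + r * s * (r + 1)" using hmu by (simp add: algebra_simps)
    also have "\<dots> = s * D" unfolding kK D_def by (simp add: algebra_simps power2_eq_square)
    finally show ?thesis .
  qed
  have Dneg: "D < 0"
  proof -
    have "s * D > 0" using muD mu_pos r by (metis add_pos_pos mult_pos_pos zero_less_one)
    then show ?thesis using s by (simp add: zero_less_mult_iff)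
  qed
  then show "r^2 + s < 0" unfolding D_def .
  have mK: "m * K = - v * s" using hm unfolding K_def .
  have hv': "v * mu = h * K" using hv unfolding h_def K_def .
  have mmu: "m * mu = - s * h"
  proof -
    have "(m * mu) * K = (m * K) * mu" by simp
    also have "\<dots> = - s * (v * mu)" unfolding mK by simp
    also have "\<dots> = (- s * h) * K" unfolding hv' by simp
    finally have "(m * mu) * K = (- s * h) * K" .
    then show ?thesis using K by (metis less_irrefl mult_right_cancel)
  qed
  have mD: "m * D = r^2 + r * s + r - s^2"
  proof -
    have "s * (m * D) = m * mu * (r + 1)" using muD by (simp add: algebra_simps)
    also have "\<dots> = s * (- h * (r + 1))" unfolding mmu by simp
    finally have "s * (m * D) = s * (- h * (r + 1))" .
    then have "m * D = - h * (r + 1)" using s by (metis less_irrefl mult_left_cancel)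
    also have "\<dots> = - (k * (r + 1)) + r * (r + 1)" unfolding h_def by (simp add: algebra_simps)
    also have "\<dots> = r^2 + r * s + r - s^2" unfolding kK by (simp add: algebra_simps power2_eq_square)
    finally show ?thesis .
  qed
  show "m = (r^2 + r * s + r - s^2) / (r^2 + s)" using mD Dneg unfolding D_def by (simp add: field_simps)
  have m_pos: "m > 0"
  proof -
    have "m * K > 0" unfolding mK using v s by (simp add: mult_pos_neg)
    then show ?thesis using K by (simp add: zero_less_mult_iff)
  qed
  have pK: "p * K = - s * m - k"
  proof -
    have "m * (K * p) = (m * K) * p" by simp
    also have "\<dots> = (- s) * (v * p)" unfolding mK by simp
    also have "\<dots> = - s * (m^2 + m - v)" unfolding r1 ..
    also have "\<dots> = - s * m^2 - s * m - m * K" using mK by (simp add: algebra_simps)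
    also have "\<dots> = m * (- s * m - s - K)" by (simp add: algebra_simps power2_eq_square)
    finally have "m * (K * p) = m * (- s * m - s - K)" .
    then have "K * p = - s * m - s - K" using m_pos by (metis less_irrefl mult_left_cancel)
    then show ?thesis unfolding K_def by (simp add: algebra_simps)
  qed
  have pD: "p * D = (s + 1) * r"
  proof -
    have "K * ((r + 1) * (p * D)) = (r + 1) * ((p * K) * D)" by (simp add: algebra_simps)
    also have "\<dots> = (r + 1) * (- s * (m * D) - k * D)" unfolding pK by (simp add: algebra_simps)
    also have "\<dots> = - s * (r + 1) * (m * D) - (k * (r + 1)) * D" by (simp add: algebra_simps)
    also have "\<dots> = - s * (r + 1) * (r^2 + r * s + r - s^2) - (s * (s - r)) * D" unfolding mD kK ..
    also have "\<dots> = (s * (s - r) - s * (r + 1)) * ((s + 1) * r)" unfolding D_def by (simp add: algebra_simps power2_eq_square)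
    also have "\<dots> = (k * (r + 1) - s * (r + 1)) * ((s + 1) * r)" unfolding kK ..
    also have "\<dots> = K * ((r + 1) * ((s + 1) * r))" unfolding K_def by (simp add: algebra_simps)
    finally have "K * ((r + 1) * (p * D)) = K * ((r + 1) * ((s + 1) * r))" .
    then have "(r + 1) * (p * D) = (r + 1) * ((s + 1) * r)" using K by (metis less_irrefl mult_left_cancel)
    moreover have "r + 1 \<noteq> 0" using r by simp
    ultimately show ?thesis by (metis mult_left_cancel)
  qed
  show "p = ((s + 1) * r) / (r^2 + s)" using pD Dneg unfolding D_def by (simp add: field_simps)
  have m1D: "(m - 1) * D = (r - s) * (s + 1)" using mD unfolding D_def by (simp add: algebra_simps power2_eq_square)
  have "(m - 1) * D * (l * D) = ((m - 1) * l) * D * D" by (simp add: algebra_simps)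
  also have "\<dots> = (p * (p - 1)) * D * D" unfolding LL ..
  also have "\<dots> = (p * D) * (p * D - D)" by (simp add: algebra_simps)
  also have "\<dots> = (r - s) * (s + 1) * (- (r^2) + r)" by (simp only: pD) (simp add: D_def algebra_simps power2_eq_square)
  finally have "(r - s) * (s + 1) * (l * D) = (r - s) * (s + 1) * (- (r^2) + r)" unfolding m1D .
  moreover have "(r - s) * (s + 1) \<noteq> 0" using m1D m1 Dneg by auto
  ultimately have "l * D = - (r^2) + r" by simp
  then show "l = (- (r^2) + r) / (r^2 + s)" using Dneg unfolding D_def by (simp add: field_simps)
qed

lemma divis:
  fixes e si k c :: int
  assumes kK: "k * (e + 1) = si * (si - e)" and cD: "c * (e^2 + si) = e - e^2"
  shows "(e + 1) dvd (2 * c + 4)"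
proof -
  define D where "D = e^2 + si"
  define A where "A = 2 - e"
  define Bq where "Bq = k + e^2 * (e - 1) + si * (2 * e - 1)"
  have h1: "c * D + 2 = (e + 1) * A" using cD unfolding D_def A_def by (simp add: algebra_simps power2_eq_square)
  have h2: "D * (D - 1) = (e + 1) * Bq"
  proof -
    have "(e + 1) * Bq = k * (e + 1) + (e + 1) * (e^2 * (e - 1) + si * (2 * e - 1))" unfolding Bq_def by (simp add: algebra_simps)
    also have "\<dots> = si * (si - e) + (e + 1) * (e^2 * (e - 1) + si * (2 * e - 1))" unfolding kK ..
    also have "\<dots> = D * (D - 1)" unfolding D_def by (simp add: algebra_simps power2_eq_square)
    finally show ?thesis by simp
  qed
  have "2 * c + 4 = 2 * (c * D + 2) - c * ((c * D + 2) * (D - 1) - c * (D * (D - 1)))"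
    by (simp add: algebra_simps)
  also have "\<dots> = (e + 1) * (2 * A - c * (A * (D - 1) - c * Bq))" unfolding h1 h2 by (simp add: algebra_simps)
  finally show ?thesis by simp
qed


theorem theorem7p4:
  fixes adj :: "'v::finite \<Rightarrow> 'v \<Rightarrow> bool" and k :: nat and ep em :: real
  assumes srg: "strongly_regular adj k"
    and prim: "primitive adj"
    and eigs: "{e. is_eigenvalue (adj_matrix adj) e} = {real k, ep, em}"
    and order: "real k > ep" "ep > 0" "0 > em"
    and mult: "real CARD('v) * em = real (eig_multiplicity (adj_matrix adj) em) * (em - real k)"
    and cocl: "\<exists>F. card F = eig_multiplicity (adj_matrix adj) em + 1 \<and>
                   (\<forall>C\<in>F. delsarte_coclique adj k em C)"
  shows "\<exists>vt kt c :: nat.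
           real vt = (ep^2 + ep * em + ep - em^2) / (ep^2 + em) \<and>
           real kt = ((em + 1) * ep) / (ep^2 + em) \<and>
           real c = (- (ep^2) + ep) / (ep^2 + em) \<and>
           (\<exists>B. symmetric_design vt kt c B) \<and>
           (\<exists>e::int. ep = of_int e \<and> (e + 1) dvd (2 * int c + 4))"
proof -
  obtain lam mu :: nat where sg: "simple_graph adj" and dg: "\<And>x. card {y. adj x y} = k"
    and cd: "\<And>x y. x \<noteq> y \<Longrightarrow> card {z. adj x z \<and> adj y z} = (if adj x y then lam else mu)"
    using srg unfolding strongly_regular_def by blast
  interpret S0: srg0 adj k lam mu
    using sg dg cd unfolding simple_graph_def by unfold_locales auto
  have epE: "is_eigenvalue (adj_matrix adj) ep" and emE: "is_eigenvalue (adj_matrix adj) em"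
    using eigs by auto
  have q1: "ep * ep = (real lam - real mu) * ep + (real k - real mu)"
    using S0.eig_root[OF epE] order by simp
  have q2: "em * em = (real lam - real mu) * em + (real k - real mu)"
    using S0.eig_root[OF emE] order by simp
  have ne: "ep - em \<noteq> 0" using order by simp
  have "(ep - em) * (ep + em) = (ep - em) * (real lam - real mu)"
    using q1 q2 by (simp add: algebra_simps)
  then have hsum: "ep + em = real lam - real mu" using ne by simp
  have hprod: "ep * em = real mu - real k"
  proof -
    have em_eq: "em = (real lam - real mu) - ep" using hsum by simp
    have "ep * em = ep * ((real lam - real mu) - ep)" using arg_cong[OF em_eq, of "\<lambda>x. ep * x"] .
    then show ?thesis using q1 by (simp add: algebra_simps)
  qed
  interpret S1: srg1 adj k lam mu ep em
    by unfold_locales (use hsum hprod order in auto)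
  define m where "m = eig_multiplicity (adj_matrix adj) em"
  have dimES: "dim S1.ES = m" unfolding m_def eig_multiplicity_def S1.ES_def ..
  obtain F where cF: "card F = m + 1" and dF: "\<forall>C\<in>F. delsarte_coclique adj k em C"
    using cocl unfolding m_def by blast
  have emk: "em - real k \<noteq> 0" using order by simp
  have mval: "real m = real CARD('v) * em / (em - real k)" using mult emk unfolding m_def by (simp add: field_simps)
  have cardC: "\<And>C. C \<in> F \<Longrightarrow> card C = m"
    using dF mval unfolding delsarte_coclique_def by (metis of_nat_eq_iff)
  have cocF: "\<And>C. C \<in> F \<Longrightarrow> (\<forall>x\<in>C. \<forall>y\<in>C. \<not> adj x y)"
    using dF unfolding delsarte_coclique_def coclique_def by blast
  have szrel: "real m * (real k - em) = - real CARD('v) * em"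
    using mult unfolding m_def by (simp add: algebra_simps)
  interpret S2: srg2 adj k lam mu ep em F m
    by unfold_locales (use dimES cF cardC cocF szrel in auto)
  obtain n :: nat where hn: "em = - real n" using S2.s_int by blast
  define e :: int where "e = int lam - int mu + int n"
  have epe: "ep = of_int e" using hsum hn unfolding e_def by simp
  obtain C D where CD: "C \<in> F" "D \<in> F" "C \<noteq> D" using S2.two_el by blast
  have Q: "(ep * real CARD('v) + real m * (real k - ep)) * (real CARD('v) - 2 * real m)
     = (real k - ep) * (real CARD('v) * real S2.pp + real CARD('v) * real m - 2 * real m ^ 2)"
    using S2.Q1[OF CD] S2.pp_prop[OF CD] by simp
  have vpos: "real CARD('v) > 0" by simp
  have kK: "real k * (ep + 1) = em * (em - ep)"
    using alg_K[OF order(2) order(3) order(1) vpos S1.mu_eq S1.vmu2 _ Q S2.R1'] szrel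
    by (simp add: algebra_simps)
  have m1: "m \<noteq> 1"
  proof
    assume m1: "m = 1"
    then have "S2.pp = 0" using S2.pp_lt by simp
    then have "real CARD('v) = 2" using S2.R1' m1 by simp
    then have "real k = - em" using szrel m1 by simp
    then have em_k: "em = - real k" by simp
    have "real k * (ep + 1) = real k * (real k + ep)" using kK unfolding em_k by (simp add: algebra_simps)
    then have "ep + 1 = real k + ep" using order by simp
    then have "k = 1" by simp
    moreover have "e \<ge> 1" using epe order by simp
    ultimately show False using order epe by simp
  qed
  have fs: "ep^2 + em < 0" "real m = (ep^2 + ep * em + ep - em^2) / (ep^2 + em)"
    "real S2.pp = ((em + 1) * ep) / (ep^2 + em)" "real S2.ll = (- (ep^2) + ep) / (ep^2 + em)"
    using alg_forms[OF order(2) order(3) order(1) vpos S1.mu_eq S1.vmu2 _ S2.R1' kK S2.ll_pp] szrel m1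
    by (simp_all add: algebra_simps)
  have dv: "(e + 1) dvd (2 * int S2.ll + 4)"
  proof (rule divis)
    show "int k * (e + 1) = (- int n) * ((- int n) - e)"
    proof -
      have "real_of_int (int k * (e + 1)) = real_of_int ((- int n) * ((- int n) - e))"
        using kK epe hn by simp
      then show ?thesis by (simp only: of_int_eq_iff)
    qed
    show "int S2.ll * (e^2 + (- int n)) = e - e^2"
    proof -
      have "real S2.ll * (ep^2 + em) = - (ep^2) + ep" using fs(1) fs(4) by (simp add: field_simps)
      then have "real_of_int (int S2.ll * (e^2 + (- int n))) = real_of_int (e - e^2)"
        using epe hn by simp
      then show ?thesis by (simp only: of_int_eq_iff)
    qed
  qed
  show ?thesis
    using fs S2.design dv epe by blast
qed

end
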